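(* Let $H$ be a Hermitian operator on $\mathcal H_a\otimes\mathcal H_b$ (finite-dimensional). Then $\mathcal C_{\rm P}^{1}(H)=\|H\|_\infty$ if and only if both the eigenspace of $H$ for its smallest eigenvalue and the eigenspace of $H$ for its largest eigenvalue contain a product vector $\ket{\phi}_a\otimes\ket{\psi}_b$.
   Context: For a density operator $\rho$ on $\mathcal H_a\otimes\mathcal H_b$, the parallel capacity is $\mathcal C_{\rm P}(\rho,H):=\max_{U_a,U_b}\mathrm{tr}[(U_a\otimes U_b)\rho(U_a\otimes U_b)^\dagger H]-\min_{U_a,U_b}\mathrm{tr}[(U_a\otimes U_b)\rho(U_a\otimes U_b)^\dagger H]$, where $U_a,U_b$ range over all unitaries on $\mathcal H_a$, $\mathcal H_b$ respectively. Let $\mathcal S^1$ be the set of separable density operators on $\mathcal H_a\otimes\mathcal H_b$, and $\mathcal C_{\rm P}^1(H):=\max_{\rho\in\mathcal S^1}\mathcal C_{\rm P}(\rho,H)$. With $E_0,E_{\max}$ the smallest and largest eigenvalues of $H$, $\|H\|_\infty:=E_{\max}-E_0$. *)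

theory Defs
  imports "HOL-Analysis.Analysis"
begin

text \<open>Operators on finite-dimensional Hilbert spaces are complex square matrices indexed by a
finite type; the bipartite space H_a tensor H_b is indexed by the product type.\<close>

definition cadj :: "complex^'n^'m \<Rightarrow> complex^'m^'n" where
  "cadj A = (\<chi> i j. cnj (A $ j $ i))"

definition hermitian :: "complex^'n^'n \<Rightarrow> bool" where
  "hermitian A \<longleftrightarrow> cadj A = A"

definition unitary :: "complex^'n^'n \<Rightarrow> bool" where
  "unitary U \<longleftrightarrow> U ** cadj U = mat 1 \<and> cadj U ** U = mat 1"

definition psd :: "complex^'n^'n \<Rightarrow> bool" where
  "psd A \<longleftrightarrow> hermitian A \<and> (\<forall>v::complex^'n. 0 \<le> Re (\<Sum>i\<in>UNIV. cnj (v $ i) * (A *v v) $ i))"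

definition density :: "complex^'n^'n \<Rightarrow> bool" where
  "density \<rho> \<longleftrightarrow> psd \<rho> \<and> trace \<rho> = 1"

definition kron :: "complex^'a^'a \<Rightarrow> complex^'b^'b \<Rightarrow> complex^('a\<times>'b)^('a\<times>'b)" where
  "kron A B = (\<chi> p q. A $ fst p $ fst q * B $ snd p $ snd q)"

definition tensor_vec :: "complex^'a \<Rightarrow> complex^'b \<Rightarrow> complex^('a\<times>'b)" where
  "tensor_vec \<phi> \<psi> = (\<chi> p. \<phi> $ fst p * \<psi> $ snd p)"

definition separable :: "(complex^('a::finite\<times>'b::finite)^('a\<times>'b)) set" where
  "separable = convex hull {kron \<rho>a \<rho>b | \<rho>a \<rho>b. density \<rho>a \<and> density \<rho>b}"

definition energy :: "complex^('a::finite\<times>'b::finite)^('a\<times>'b) \<Rightarrow> complex^('a\<times>'b)^('a\<times>'b)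
    \<Rightarrow> complex^'a^'a \<Rightarrow> complex^'b^'b \<Rightarrow> real" where
  "energy \<rho> H Ua Ub = Re (trace (kron Ua Ub ** \<rho> ** cadj (kron Ua Ub) ** H))"

text \<open>Parallel capacity (max/min over local unitaries; attained by compactness, written as SUP/INF).\<close>
definition capP :: "complex^('a::finite\<times>'b::finite)^('a\<times>'b) \<Rightarrow> complex^('a\<times>'b)^('a\<times>'b) \<Rightarrow> real" where
  "capP \<rho> H =
     (SUP U\<in>{(Ua,Ub). unitary Ua \<and> unitary Ub}. energy \<rho> H (fst U) (snd U))
   - (INF U\<in>{(Ua,Ub). unitary Ua \<and> unitary Ub}. energy \<rho> H (fst U) (snd U))"

definition capP1 :: "complex^('a::finite\<times>'b::finite)^('a\<times>'b) \<Rightarrow> real" where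
  "capP1 H = (SUP \<rho>\<in>separable. capP \<rho> H)"

definition real_eigenvalues :: "complex^'n^'n \<Rightarrow> real set" where
  "real_eigenvalues A = {r. \<exists>v. v \<noteq> 0 \<and> A *v v = of_real r *s v}"

definition E0 :: "complex^'n^'n \<Rightarrow> real" where
  "E0 A = Min (real_eigenvalues A)"

definition Emax :: "complex^'n^'n \<Rightarrow> real" where
  "Emax A = Max (real_eigenvalues A)"

definition opnorm_inf :: "complex^'n^'n \<Rightarrow> real" where
  "opnorm_inf A = Emax A - E0 A"

definition eigenspace :: "complex^'n^'n \<Rightarrow> real \<Rightarrow> (complex^'n) set" where
  "eigenspace A r = {v. A *v v = of_real r *s v}"

definition contains_product_vector :: "(complex^('a::finite\<times>'b::finite)) set \<Rightarrow> bool" where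
  "contains_product_vector S \<longleftrightarrow>
     (\<exists>(\<phi>::complex^'a) (\<psi>::complex^'b). \<phi> \<noteq> 0 \<and> \<psi> \<noteq> 0 \<and> tensor_vec \<phi> \<psi> \<in> S)"

end

theory Submission
  imports Defs
begin

definition ip :: "complex^'n \<Rightarrow> complex^'n \<Rightarrow> complex" where
  "ip v w = (\<Sum>i\<in>UNIV. cnj (v $ i) * w $ i)"

definition qf :: "complex^'n^'n \<Rightarrow> complex^'n \<Rightarrow> real" where
  "qf A v = Re (ip v (A *v v))"

definition outer :: "complex^'n \<Rightarrow> complex^'n \<Rightarrow> complex^'n^'n" where
  "outer v w = (\<chi> i j. v $ i * cnj (w $ j))"

lemma psd_qf: "psd A \<longleftrightarrow> hermitian A \<and> (\<forall>v. 0 \<le> qf A v)"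
  by (simp add: psd_def qf_def ip_def)

lemma ip_add_right: "ip v (x + y) = ip v x + ip v y"
  by (simp add: ip_def distrib_left sum.distrib)
lemma ip_add_left: "ip (x + y) v = ip x v + ip y v"
  by (simp add: ip_def distrib_right sum.distrib)
lemma ip_diff_right: "ip v (x - y) = ip v x - ip v y"
  by (simp add: ip_def right_diff_distrib sum_subtractf)
lemma ip_diff_left: "ip (x - y) v = ip x v - ip y v"
  by (simp add: ip_def left_diff_distrib sum_subtractf)
lemma ip_smult_right: "ip v (c *s x) = c * ip v x"
  by (simp add: ip_def sum_distrib_left algebra_simps)
lemma ip_smult_left: "ip (c *s x) v = cnj c * ip x v"
  by (simp add: ip_def sum_distrib_left algebra_simps)
lemma ip_zero_right[simp]: "ip v 0 = 0" by (simp add: ip_def)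
lemma ip_zero_left[simp]: "ip 0 v = 0" by (simp add: ip_def)
lemma ip_cnj: "cnj (ip v w) = ip w v"
  by (simp add: ip_def mult.commute)

lemma ip_self: "ip v v = of_real ((norm v)^2)"
proof -
  have "ip v v = (\<Sum>i\<in>UNIV. of_real ((cmod (v$i))^2))"
    unfolding ip_def by (intro sum.cong refl) (metis complex_norm_square mult.commute)
  also have "\<dots> = of_real (\<Sum>i\<in>UNIV. (cmod (v$i))^2)" by simp
  also have "(\<Sum>i\<in>UNIV. (cmod (v$i))^2) = (norm v)^2"
    by (simp add: norm_vec_def L2_set_def sum_nonneg)
  finally show ?thesis .
qed

lemma ip_self_eq0: "ip v v = 0 \<longleftrightarrow> v = 0"
  by (simp add: ip_self)

lemma mv_smult: "(A::complex^'n^'m) *v (c *s v) = c *s (A *v v)"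
  by (simp add: vec_eq_iff matrix_vector_mult_def sum_distrib_left algebra_simps)
lemma mv_add: "(A::complex^'n^'m) *v (x + y) = A *v x + A *v y"
  by (simp add: vec_eq_iff matrix_vector_mult_def distrib_left sum.distrib)
lemma mv_diff: "(A::complex^'n^'m) *v (x - y) = A *v x - A *v y"
  by (simp add: vec_eq_iff matrix_vector_mult_def right_diff_distrib sum_subtractf)
lemma mv_mdiff: "((A::complex^'n^'m) - B) *v x = A *v x - B *v x"
  by (simp add: vec_eq_iff matrix_vector_mult_def left_diff_distrib sum_subtractf)
lemma mv_mat: "mat c *v (x::complex^'n) = c *s x"
proof -
  have "\<And>i. (\<Sum>j\<in>UNIV. (if i = j then c else 0) * x $ j) = c * x $ i"
  proof -
    fix i
    have "(\<Sum>j\<in>UNIV. (if i = j then c else 0) * x $ j) = (\<Sum>j\<in>UNIV. if i = j then c * x $ j else 0)"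
      by (intro sum.cong) auto
    then show "(\<Sum>j\<in>UNIV. (if i = j then c else 0) * x $ j) = c * x $ i" by simp
  qed
  then show ?thesis by (simp add: vec_eq_iff matrix_vector_mult_def mat_def)
qed

lemma ip_adj: "ip v ((A::complex^'n^'m) *v w) = ip (cadj A *v v) w"
  unfolding ip_def cadj_def matrix_vector_mult_def
  by (simp add: sum_distrib_left sum_distrib_right algebra_simps cnj_sum)
     (rule sum.swap)

lemma cadj_cadj[simp]: "cadj (cadj A) = A"
  by (simp add: cadj_def vec_eq_iff)

lemma herm_ip: "hermitian A \<Longrightarrow> ip v (A *v w) = ip (A *v v) w"
  by (metis hermitian_def ip_adj)

lemma herm_ip_cnj: "hermitian A \<Longrightarrow> ip v (A *v w) = cnj (ip w (A *v v))"
  by (simp add: herm_ip ip_cnj)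

lemma herm_ip_real: "hermitian A \<Longrightarrow> ip v (A *v v) = of_real (qf A v)"
  unfolding qf_def by (metis Reals_cnj_iff complex_is_Real_iff herm_ip_cnj of_real_Re)

lemma ip_expand:
  "ip (w + s *s x) ((A::complex^'n^'n) *v (w + s *s x)) =
     ip w (A *v w) + s * ip w (A *v x) + cnj s * ip x (A *v w) + cnj s * s * ip x (A *v x)"
  by (simp only: mv_add mv_smult ip_add_left ip_add_right ip_smult_left ip_smult_right) (simp add: algebra_simps)

lemma re_mult_cnj: "Re (z * cnj z) = (cmod z)^2"
  using complex_norm_square[of z] by (metis Re_complex_of_real)

lemma CS_psd:
  assumes h: "hermitian A" and p: "\<forall>v. 0 \<le> qf A v"
  shows "(cmod (ip x (A *v w)))^2 \<le> qf A x * qf A w"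
proof -
  define b where "b = ip x (A *v w)"
  define a where "a = qf A x"
  define q where "q = qf A w"
  have a0: "0 \<le> a" "0 \<le> q" using p by (auto simp: a_def q_def)
  have e1: "ip w (A *v x) = cnj b" unfolding b_def by (rule herm_ip_cnj[OF h])
  have e2: "ip w (A *v w) = of_real q" unfolding q_def by (rule herm_ip_real[OF h])
  have e3: "ip x (A *v x) = of_real a" unfolding a_def by (rule herm_ip_real[OF h])
  have key: "0 \<le> q + 2 * Re (s * cnj b) + (cmod s)^2 * a" for s
  proof -
    have "0 \<le> qf A (w + s *s x)" using p by blast
    hence "0 \<le> Re (of_real q + s * cnj b + cnj s * b + cnj s * s * of_real a)"
      unfolding qf_def ip_expand e1 e2 e3 b_def[symmetric] .
    moreover have "Re (cnj s * b) = Re (s * cnj b)" by simp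
    moreover have "Re (cnj s * s * of_real a) = (cmod s)^2 * a"
      using re_mult_cnj[of s] by (simp add: mult.commute)
    moreover have "Re (of_real q + s * cnj b + cnj s * b + cnj s * s * of_real a) = q + Re (s * cnj b) + Re (cnj s * b) + Re (cnj s * s * of_real a)"
      by (simp only: plus_complex.sel Re_complex_of_real)
    ultimately show ?thesis by linarith
  qed
  show ?thesis
  proof (cases "a = 0")
    case True
    show ?thesis
    proof (rule ccontr)
      assume "\<not> ?thesis"
      hence "\<not> (cmod b)^2 \<le> a * q" unfolding a_def q_def b_def .
      hence bp: "0 < (cmod b)^2" using True by simp
      define t where "t = (q + 1) / (cmod b)^2"
      have "0 \<le> q + 2 * Re ((- of_real t * b) * cnj b) + (cmod (- of_real t * b))^2 * a"
        by (rule key)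
      also have "Re ((- of_real t * b) * cnj b) = - t * (cmod b)^2"
        using re_mult_cnj[of b] by (simp add: mult.assoc)
      finally have "0 \<le> q - 2 * (t * (cmod b)^2)" using True by simp
      moreover have "t * (cmod b)^2 = q + 1" unfolding t_def using bp by simp
      ultimately show False using a0 by linarith
    qed
  next
    case False
    hence ap: "0 < a" using a0 by simp
    have k: "0 \<le> q + 2 * Re ((- b / of_real a) * cnj b) + (cmod (- b / of_real a))^2 * a"
      by (rule key)
    have k1: "Re ((- b / of_real a) * cnj b) = -(Re (b * cnj b) / a)"
      by (simp add: Re_divide_of_real)
    have k2: "(cmod (- b / of_real a))^2 * a = (cmod b)^2 / a"
      using ap by (simp add: norm_divide power2_eq_square)
    from k have "0 \<le> q + 2 * (-(Re (b * cnj b) / a)) + (cmod b)^2 / a" unfolding k1 k2 .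
    hence "0 \<le> q + 2 * (-((cmod b)^2 / a)) + (cmod b)^2 / a" unfolding re_mult_cnj .
    hence "0 \<le> q - (cmod b)^2 / a" by linarith
    hence "(cmod b)^2 / a \<le> q" by simp
    hence "(cmod b)^2 \<le> q * a" using ap by (simp add: divide_le_eq)
    thus ?thesis unfolding b_def a_def q_def by (simp add: mult.commute)
  qed
qed

lemma psd_null:
  assumes h: "hermitian A" and p: "\<forall>v. 0 \<le> qf A v" and z: "qf A v = 0"
  shows "A *v v = 0"
proof -
  have "(cmod (ip (A *v v) (A *v v)))^2 \<le> qf A (A *v v) * qf A v" by (rule CS_psd[OF h p])
  hence "ip (A *v v) (A *v v) = 0" using z by simp
  thus ?thesis by (simp add: ip_self_eq0)
qed

lemma qf_smult: "qf A (c *s v) = (cmod c)^2 * qf A v"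
proof -
  have "ip (c *s v) (A *v (c *s v)) = of_real ((cmod c)^2) * ip v (A *v v)"
    by (simp add: mv_smult ip_smult_left ip_smult_right complex_norm_square[symmetric] mult.assoc)
  thus ?thesis unfolding qf_def by simp
qed

lemma norm_smult_sq: "(norm (c *s (v::complex^'n)))^2 = (cmod c)^2 * (norm v)^2"
proof -
  have "of_real ((norm (c *s v))^2) = (of_real ((cmod c)^2 * (norm v)^2) :: complex)"
    unfolding ip_self[symmetric] ip_smult_left ip_smult_right
    by (simp add: ip_self complex_norm_square[symmetric] mult.assoc)
  thus ?thesis using of_real_eq_iff by blast
qed

lemma norm_smult_vec: "norm (c *s (v::complex^'n)) = cmod c * norm v"
  by (rule power2_eq_imp_eq) (simp_all add: norm_smult_sq power_mult_distrib)

lemma qf_zero[simp]: "qf A 0 = 0"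
  by (simp add: qf_def)

lemma cont_qf: "continuous_on S (\<lambda>v. qf A v)"
  unfolding qf_def ip_def matrix_vector_mult_def
  by (simp add: vec_lambda_beta) (intro continuous_intros)

lemma unit_normalize:
  assumes "(v::complex^'n) \<noteq> 0"
  shows "v = of_real (norm v) *s ((of_real (1 / norm v)) *s v)" "norm ((of_real (1 / norm v)) *s v) = 1"
  using assms by (simp_all add: vector_smult_assoc norm_smult_vec norm_divide)

lemma rayleigh_max:
  fixes A :: "complex^'n^'n"
  obtains v0 where "norm v0 = 1" "\<And>v. qf A v \<le> qf A v0 * (norm v)^2"
proof -
  have "compact (sphere (0::complex^'n) 1)" by simp
  moreover have "sphere (0::complex^'n) 1 \<noteq> {}" by simp
  have "compact ((\<lambda>v. qf A v) ` sphere 0 1)"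
    by (rule compact_continuous_image[OF cont_qf]) simp
  moreover have "(\<lambda>v. qf A v) ` sphere 0 1 \<noteq> {}" by simp
  ultimately
  obtain m where "m \<in> (\<lambda>v. qf A v) ` sphere 0 1" "\<forall>t\<in>(\<lambda>v. qf A v) ` sphere 0 1. t \<le> m"
    using compact_attains_sup by blast
  then obtain v0 where v0: "v0 \<in> sphere 0 1" "\<And>v. v \<in> sphere 0 1 \<Longrightarrow> qf A v \<le> qf A v0"
    by auto
  have "qf A v \<le> qf A v0 * (norm v)^2" for v
  proof (cases "v = 0")
    case False
    define u where "u = (of_real (1 / norm v)) *s v"
    have "v = of_real (norm v) *s u" "norm u = 1" using unit_normalize[OF False] u_def by auto
    hence "qf A v = qf A (of_real (norm v) *s u)" by simp
    hence "qf A v = (norm v)^2 * qf A u" by (simp add: qf_smult)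
    moreover have "qf A u \<le> qf A v0" using v0(2) \<open>norm u = 1\<close> by simp
    ultimately show ?thesis by (simp add: mult.commute[of "(norm v)^2"] mult_right_mono)
  qed simp
  thus ?thesis using that v0(1) by simp
qed

lemma rayleigh_min:
  fixes A :: "complex^'n^'n"
  obtains v0 where "norm v0 = 1" "\<And>v. qf A v0 * (norm v)^2 \<le> qf A v"
proof -
  have "compact (sphere (0::complex^'n) 1)" by simp
  moreover have "sphere (0::complex^'n) 1 \<noteq> {}" by simp
  have "compact ((\<lambda>v. qf A v) ` sphere 0 1)"
    by (rule compact_continuous_image[OF cont_qf]) simp
  moreover have "(\<lambda>v. qf A v) ` sphere 0 1 \<noteq> {}" by simp
  ultimately
  obtain m where "m \<in> (\<lambda>v. qf A v) ` sphere 0 1" "\<forall>t\<in>(\<lambda>v. qf A v) ` sphere 0 1. m \<le> t"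
    using compact_attains_inf by blast
  then obtain v0 where v0: "v0 \<in> sphere 0 1" "\<And>v. v \<in> sphere 0 1 \<Longrightarrow> qf A v0 \<le> qf A v"
    by auto
  have "qf A v0 * (norm v)^2 \<le> qf A v" for v
  proof (cases "v = 0")
    case False
    define u where "u = (of_real (1 / norm v)) *s v"
    have "v = of_real (norm v) *s u" "norm u = 1" using unit_normalize[OF False] u_def by auto
    hence "qf A v = qf A (of_real (norm v) *s u)" by simp
    hence "qf A v = (norm v)^2 * qf A u" by (simp add: qf_smult)
    moreover have "qf A v0 \<le> qf A u" using v0(2) \<open>norm u = 1\<close> by simp
    ultimately show ?thesis by (simp add: mult.commute[of "(norm v)^2"] mult_right_mono)
  qed simp
  thus ?thesis using that v0(1) by simp
qed

lemma cadj_diff: "cadj (A - B) = cadj A - cadj B"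
  by (simp add: cadj_def vec_eq_iff)
lemma cadj_mat: "cadj (mat c :: complex^'n^'n) = mat (cnj c)"
  by (simp add: cadj_def vec_eq_iff mat_def)

lemma herm_shift:
  assumes "hermitian A"
  shows "hermitian (mat (of_real M) - A)" "hermitian (A - mat (of_real M))"
  using assms by (simp_all add: hermitian_def cadj_diff cadj_mat)

lemma qf_shift:
  "qf (mat (of_real M) - A) v = M * (norm v)^2 - qf A v"
  "qf (A - mat (of_real M)) v = qf A v - M * (norm v)^2"
  by (simp_all add: qf_def mv_mdiff mv_mat ip_diff_right ip_smult_right ip_self)

lemma eig_qf: "A *v v = of_real r *s v \<Longrightarrow> qf A v = r * (norm v)^2"
  by (simp add: qf_def ip_smult_right ip_self)

lemma eig_max:
  assumes h: "hermitian A" and b: "\<And>v. qf A v \<le> M * (norm v)^2" and e: "qf A v0 = M * (norm v0)^2"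
  shows "A *v v0 = of_real M *s v0"
proof -
  have "(mat (of_real M) - A) *v v0 = 0"
    by (rule psd_null[OF herm_shift(1)[OF h]]) (use b e in \<open>auto simp: qf_shift\<close>)
  thus ?thesis by (simp add: mv_mdiff mv_mat)
qed

lemma eig_min:
  assumes h: "hermitian A" and b: "\<And>v. M * (norm v)^2 \<le> qf A v" and e: "qf A v0 = M * (norm v0)^2"
  shows "A *v v0 = of_real M *s v0"
proof -
  have "(A - mat (of_real M)) *v v0 = 0"
    by (rule psd_null[OF herm_shift(2)[OF h]]) (use b e in \<open>auto simp: qf_shift\<close>)
  thus ?thesis by (simp add: mv_mdiff mv_mat)
qed

lemma inner_ip: "inner x y = Re (ip (x::complex^'n) y)"
  by (simp add: inner_vec_def ip_def inner_complex_def)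

lemma real_eig_finite:
  assumes h: "hermitian A"
  shows "finite (real_eigenvalues A)"
proof -
  define S where "S = real_eigenvalues A"
  define f where "f r = (SOME v. v \<noteq> 0 \<and> A *v v = of_real r *s v)" for r
  have f: "f r \<noteq> 0 \<and> A *v f r = of_real r *s f r" if "r \<in> S" for r
  proof -
    have "\<exists>v. v \<noteq> 0 \<and> A *v v = of_real r *s v" using that unfolding S_def real_eigenvalues_def by auto
    thus ?thesis unfolding f_def by (rule someI_ex)
  qed
  have inj: "inj_on f S"
  proof (rule inj_onI)
    fix r s assume rs: "r \<in> S" "s \<in> S" "f r = f s"
    hence "of_real r *s f r = of_real s *s f r" using f by metis
    hence "(of_real r - of_real s) *s f r = 0" by (simp add: vector_ssub_ldistrib)
    moreover obtain i where "f r $ i \<noteq> 0" using f[OF rs(1)] by (auto simp: vec_eq_iff)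
    ultimately have "(of_real r - of_real s) * f r $ i = (0::complex)" by (metis vector_smult_component zero_index)
    thus "r = s" using \<open>f r $ i \<noteq> 0\<close> by simp
  qed
  have "pairwise orthogonal (f ` S)"
  proof (rule pairwiseI, clarify)
    fix r s assume rs: "r \<in> S" "s \<in> S" "f r \<noteq> f s"
    hence "r \<noteq> s" by auto
    have "ip (f r) (A *v f s) = of_real s * ip (f r) (f s)" using f[OF rs(2)] by (simp add: ip_smult_right)
    moreover have "ip (f r) (A *v f s) = ip (A *v f r) (f s)" by (rule herm_ip[OF h])
    moreover have "ip (A *v f r) (f s) = of_real r * ip (f r) (f s)" using f[OF rs(1)] by (simp add: ip_smult_left)
    ultimately have "(of_real r - of_real s) * ip (f r) (f s) = 0" by (simp add: algebra_simps)
    hence "ip (f r) (f s) = 0" using \<open>r \<noteq> s\<close> by simp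
    thus "orthogonal (f r) (f s)" by (simp add: orthogonal_def inner_ip)
  qed
  hence "finite (f ` S)" by (rule pairwise_orthogonal_imp_finite)
  thus ?thesis using finite_imageD[OF _ inj] S_def by simp
qed

lemma Emax_char:
  assumes h: "hermitian A" and n: "norm v0 = 1" and b: "\<And>v. qf A v \<le> qf A v0 * (norm v)^2"
  shows "Emax A = qf A v0" "A *v v0 = of_real (qf A v0) *s v0"
proof -
  show ev: "A *v v0 = of_real (qf A v0) *s v0"
    by (rule eig_max[OF h b]) (simp add: n)
  have "v0 \<noteq> 0" using n by auto
  hence "qf A v0 \<in> real_eigenvalues A" unfolding real_eigenvalues_def using ev by blast
  moreover have "r \<le> qf A v0" if rr: "r \<in> real_eigenvalues A" for r
  proof -
    obtain v where v: "v \<noteq> 0" "A *v v = of_real r *s v" using rr unfolding real_eigenvalues_def by auto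
    have "r * (norm v)^2 \<le> qf A v0 * (norm v)^2" using b[of v] eig_qf[OF v(2)] by simp
    thus ?thesis using v(1) by simp
  qed
  ultimately show "Emax A = qf A v0" unfolding Emax_def
    by (intro Max_eqI real_eig_finite h) auto
qed

lemma E0_char:
  assumes h: "hermitian A" and n: "norm v0 = 1" and b: "\<And>v. qf A v0 * (norm v)^2 \<le> qf A v"
  shows "E0 A = qf A v0" "A *v v0 = of_real (qf A v0) *s v0"
proof -
  show ev: "A *v v0 = of_real (qf A v0) *s v0"
    by (rule eig_min[OF h b]) (simp add: n)
  have "v0 \<noteq> 0" using n by auto
  hence "qf A v0 \<in> real_eigenvalues A" unfolding real_eigenvalues_def using ev by blast
  moreover have "qf A v0 \<le> r" if rr: "r \<in> real_eigenvalues A" for r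
  proof -
    obtain v where v: "v \<noteq> 0" "A *v v = of_real r *s v" using rr unfolding real_eigenvalues_def by auto
    have "qf A v0 * (norm v)^2 \<le> r * (norm v)^2" using b[of v] eig_qf[OF v(2)] by simp
    thus ?thesis using v(1) by simp
  qed
  ultimately show "E0 A = qf A v0" unfolding E0_def
    by (intro Min_eqI real_eig_finite h) auto
qed

definition bv :: "'n \<Rightarrow> complex^'n" where
  "bv i = (\<chi> j. if j = i then 1 else 0)"

lemma mv_bv: "((A::complex^'n^'m) *v bv i) $ j = A $ j $ i"
proof -
  have "(\<Sum>k\<in>UNIV. A $ j $ k * (if k = i then 1 else 0)) = (\<Sum>k\<in>UNIV. if k = i then A $ j $ k else 0)"
    by (intro sum.cong) auto
  thus ?thesis by (simp add: matrix_vector_mult_def bv_def)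
qed

lemma ip_bv: "ip (bv i) v = v $ i"
proof -
  have "(\<Sum>k\<in>UNIV. cnj (if k = i then 1 else 0) * v $ k) = (\<Sum>k\<in>UNIV. if k = i then v $ k else 0)"
    by (intro sum.cong) auto
  thus ?thesis by (simp add: ip_def bv_def)
qed

lemma qf_bv: "qf A (bv i) = Re (A $ i $ i)"
  by (simp add: qf_def ip_bv mv_bv)

lemma herm_entry: "hermitian A \<Longrightarrow> A $ i $ j = cnj (A $ j $ i)"
  unfolding hermitian_def cadj_def by (metis vec_lambda_beta)

lemma herm_diag: "hermitian A \<Longrightarrow> A $ i $ i = of_real (Re (A $ i $ i))"
  using herm_entry[of A i i] by (metis Reals_cnj_iff complex_is_Real_iff of_real_Re)

lemma psd_diag_zero:
  assumes p: "psd A" and z: "A $ i $ i = 0"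
  shows "A $ j $ i = 0" "A $ i $ j = 0"
proof -
  have h: "hermitian A" and q: "\<forall>v. 0 \<le> qf A v" using p by (auto simp: psd_qf)
  have "A *v bv i = 0" by (rule psd_null[OF h q]) (simp add: qf_bv z)
  hence "(A *v bv i) $ j = 0" by simp
  thus "A $ j $ i = 0" by (simp add: mv_bv)
  thus "A $ i $ j = 0" using herm_entry[OF h, of i j] by simp
qed

lemma cadj_outer: "cadj (outer v w) = outer w v"
  by (simp add: cadj_def outer_def vec_eq_iff)

lemma outer_mv: "outer v w *v x = ip w x *s v"
  by (simp add: outer_def matrix_vector_mult_def ip_def vec_eq_iff sum_distrib_left algebra_simps)

lemma deflate:
  assumes p: "psd A" and a: "0 < Re (A $ i $ i)"
  defines "c \<equiv> of_real (1 / sqrt (Re (A $ i $ i))) *s (A *v bv i)"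
  shows "psd (A - outer c c)" "(A - outer c c) $ i $ i = 0"
        "\<And>j. A $ j $ j = 0 \<Longrightarrow> (A - outer c c) $ j $ j = 0"
proof -
  define r where "r = Re (A $ i $ i)"
  have h: "hermitian A" and q: "\<forall>v. 0 \<le> qf A v" using p by (auto simp: psd_qf)
  have Aii: "A $ i $ i = of_real r" unfolding r_def by (rule herm_diag[OF h])
  have r0: "0 < r" using a unfolding r_def .
  have cj: "c $ j = of_real (1 / sqrt r) * A $ j $ i" for j
    unfolding c_def r_def by (simp add: mv_bv)
  show "psd (A - outer c c)"
    unfolding psd_qf
  proof
    show "hermitian (A - outer c c)" using h by (simp add: hermitian_def cadj_diff cadj_outer)
    show "\<forall>v. 0 \<le> qf (A - outer c c) v"
    proof
      fix w
      have e1: "qf (A - outer c c) w = qf A w - Re (ip c w * ip w c)"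
        by (simp add: qf_def mv_mdiff ip_diff_right outer_mv ip_smult_right mult.commute)
      have e2: "Re (ip c w * ip w c) = (cmod (ip c w))^2"
        using re_mult_cnj[of "ip c w"] by (simp add: ip_cnj)
      have e3: "ip c w = of_real (1 / sqrt r) * ip (bv i) (A *v w)"
        unfolding c_def r_def[symmetric] by (simp add: ip_smult_left herm_ip[OF h])
      have "cmod (of_real (1 / sqrt r) * ip (bv i) (A *v w)) = cmod (ip (bv i) (A *v w)) / sqrt r"
        using r0 by (simp add: norm_mult norm_divide)
      hence e4: "(cmod (ip c w))^2 = (cmod (ip (bv i) (A *v w)))^2 / r"
        unfolding e3 using r0 by (simp add: power_divide)
      have "(cmod (ip (bv i) (A *v w)))^2 \<le> r * qf A w"
        using CS_psd[OF h q, of "bv i" w] by (simp add: qf_bv r_def)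
      hence "(cmod (ip (bv i) (A *v w)))^2 / r \<le> qf A w"
        using r0 by (simp add: divide_le_eq mult.commute)
      thus "0 \<le> qf (A - outer c c) w" using e1 e2 e4 by simp
    qed
  qed
  have "c $ i * cnj (c $ i) = of_real r"
  proof -
    have ci: "c $ i = of_real (r / sqrt r)" by (simp add: cj Aii)
    have "(r / sqrt r) * (r / sqrt r) = (r * r) / (sqrt r * sqrt r)" by simp
    also have "\<dots> = (r * r) / r" using r0 by simp
    also have "\<dots> = r" using r0 by simp
    finally have sq: "(r / sqrt r) * (r / sqrt r) = r" .
    have "c $ i * cnj (c $ i) = of_real ((r / sqrt r) * (r / sqrt r))" unfolding ci by (simp only: complex_cnj_complex_of_real of_real_mult)
    thus ?thesis unfolding sq .
  qed
  thus "(A - outer c c) $ i $ i = 0" by (simp add: outer_def Aii)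
  fix j assume "A $ j $ j = 0"
  hence "A $ j $ i = 0" by (rule psd_diag_zero(2)[OF p])
  thus "(A - outer c c) $ j $ j = 0" by (simp add: outer_def cj \<open>A $ j $ j = 0\<close>)
qed

definition osum :: "nat \<Rightarrow> (nat \<Rightarrow> complex^'n) \<Rightarrow> complex^'n^'n" where
  "osum m c = (\<Sum>k<m. outer (c k) (c k))"

lemma osum_Suc: "osum (Suc m) (c(m := v)) = osum m c + outer v v"
proof -
  have "osum m (c(m := v)) = osum m c" unfolding osum_def by (intro sum.cong) auto
  thus ?thesis by (simp add: osum_def)
qed

lemma psd_decomp: "psd A \<Longrightarrow> \<exists>m c. A = osum m c"
proof (induction "card {i. A $ i $ i \<noteq> 0}" arbitrary: A rule: less_induct)
  case less
  show ?case
  proof (cases "\<exists>i. A $ i $ i \<noteq> 0")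
    case False
    hence "A = 0" using psd_diag_zero(1)[OF less.prems] by (auto simp: vec_eq_iff)
    hence "A = osum 0 c" for c by (simp add: osum_def)
    thus ?thesis by blast
  next
    case True
    then obtain i where i: "A $ i $ i \<noteq> 0" by blast
    have h: "hermitian A" and q: "\<forall>v. 0 \<le> qf A v" using less.prems by (auto simp: psd_qf)
    have "0 \<le> Re (A $ i $ i)" using q qf_bv by metis
    moreover have "Re (A $ i $ i) \<noteq> 0" using i herm_diag[OF h, of i] by force
    ultimately have a: "0 < Re (A $ i $ i)" by simp
    define c where "c = of_real (1 / sqrt (Re (A $ i $ i))) *s (A *v bv i)"
    note d = deflate[OF less.prems a, folded c_def]
    have sub: "{j. (A - outer c c) $ j $ j \<noteq> 0} \<subset> {j. A $ j $ j \<noteq> 0}"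
      using d(2,3) i by auto
    have "card {j. (A - outer c c) $ j $ j \<noteq> 0} < card {j. A $ j $ j \<noteq> 0}"
      by (rule psubset_card_mono[OF _ sub]) simp
    then obtain m e where e: "A - outer c c = osum m e" using less.hyps d(1) by blast
    have "A = osum (Suc m) (e(m := c))" by (simp add: osum_Suc e[symmetric])
    thus ?thesis by blast
  qed
qed

lemma trace_sum: "trace (sum f S) = (\<Sum>x\<in>S. trace (f x))"
  unfolding trace_def by (simp add: sum_component) (rule sum.swap)

lemma trace_outer: "trace (outer v v) = ip v v"
  by (simp add: trace_def outer_def ip_def mult.commute)

lemma trace_osum: "trace (osum m c) = of_real (\<Sum>k<m. (norm (c k))^2)"
  by (simp add: osum_def trace_sum trace_outer ip_self)

lemma density_osum:
  assumes "density A" "A = osum m c"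
  shows "(\<Sum>k<m. (norm (c k))^2) = 1"
  using assms trace_osum[of m c] unfolding density_def by (metis of_real_eq_1_iff)

lemma mat_add_rdistrib: "((A::complex^'n^'m) + B) ** C = A ** C + B ** C"
  by (simp add: matrix_matrix_mult_def vec_eq_iff distrib_right sum.distrib)

lemma mat_sum_left: "finite S \<Longrightarrow> (sum f S) ** (B::complex^'p^'n) = (\<Sum>x\<in>S. f x ** B)"
  by (induction S rule: finite_induct) (simp_all add: mat_add_rdistrib)

lemma mat_sum_right: "finite S \<Longrightarrow> (B::complex^'n^'m) ** (sum f S) = (\<Sum>x\<in>S. B ** f x)"
  by (induction S rule: finite_induct) (simp_all add: matrix_add_ldistrib)

lemma energy_sum:
  assumes "finite S"
  shows "energy (sum f S) H Ua Ub = (\<Sum>x\<in>S. energy (f x) H Ua Ub)"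
  unfolding energy_def using assms
  by (simp add: mat_sum_left mat_sum_right trace_sum)

lemma mat_outer_left: "(K::complex^'n^'n) ** outer v w = outer (K *v v) w"
  by (simp add: matrix_matrix_mult_def outer_def matrix_vector_mult_def vec_eq_iff sum_distrib_right mult.assoc)

lemma outer_cadj_right: "outer x v ** cadj (K::complex^'n^'n) = outer x (K *v v)"
  by (simp add: matrix_matrix_mult_def outer_def matrix_vector_mult_def cadj_def vec_eq_iff
      sum_distrib_left cnj_sum mult.assoc mult.commute mult.left_commute)

lemma trace_outer_mul: "trace (outer x x ** H) = ip x (H *v x)"
  unfolding trace_def outer_def matrix_matrix_mult_def ip_def matrix_vector_mult_def
  by (simp add: sum_distrib_left mult.commute mult.left_commute) (rule sum.swap)

lemma energy_outer: "energy (outer v v) H Ua Ub = qf H (kron Ua Ub *v v)"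
  by (simp add: energy_def mat_outer_left outer_cadj_right trace_outer_mul qf_def)

lemma kron_tensor: "kron A B *v tensor_vec x y = tensor_vec (A *v x) (B *v y)"
proof -
  have "(\<Sum>q\<in>UNIV. A $ fst p $ fst q * B $ snd p $ snd q * (x $ fst q * y $ snd q))
      = (\<Sum>q1\<in>UNIV. A $ fst p $ q1 * x $ q1) * (\<Sum>q2\<in>UNIV. B $ snd p $ q2 * y $ q2)" for p
  proof -
    have "(\<Sum>q1\<in>UNIV. A $ fst p $ q1 * x $ q1) * (\<Sum>q2\<in>UNIV. B $ snd p $ q2 * y $ q2)
        = (\<Sum>q1\<in>UNIV. \<Sum>q2\<in>UNIV. A $ fst p $ q1 * x $ q1 * (B $ snd p $ q2 * y $ q2))"
      by (rule sum_product)
    also have "\<dots> = (\<Sum>q\<in>UNIV \<times> UNIV. A $ fst p $ fst q * x $ fst q * (B $ snd p $ snd q * y $ snd q))"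
      by (subst sum.cartesian_product) (simp add: split_def)
    also have "\<dots> = (\<Sum>q\<in>UNIV. A $ fst p $ fst q * B $ snd p $ snd q * (x $ fst q * y $ snd q))"
      by (simp add: UNIV_Times_UNIV mult_ac)
    finally show ?thesis by simp
  qed
  thus ?thesis by (simp add: kron_def tensor_vec_def matrix_vector_mult_def vec_eq_iff)
qed

lemma ip_tensor: "ip (tensor_vec a b) (tensor_vec c d) = ip a c * ip b d"
proof -
  have "ip a c * ip b d = (\<Sum>q1\<in>UNIV. \<Sum>q2\<in>UNIV. cnj (a $ q1) * c $ q1 * (cnj (b $ q2) * d $ q2))"
    unfolding ip_def by (rule sum_product)
  also have "\<dots> = (\<Sum>q\<in>UNIV \<times> UNIV. cnj (a $ fst q) * c $ fst q * (cnj (b $ snd q) * d $ snd q))"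
    by (subst sum.cartesian_product) (simp add: split_def)
  also have "\<dots> = ip (tensor_vec a b) (tensor_vec c d)"
    by (simp add: UNIV_Times_UNIV mult_ac ip_def tensor_vec_def)
  finally show ?thesis by simp
qed

lemma norm_tensor_sq: "(norm (tensor_vec a b))^2 = (norm a)^2 * (norm b)^2"
proof -
  have "(of_real ((norm (tensor_vec a b))^2)::complex) = of_real ((norm a)^2) * of_real ((norm b)^2)"
    using ip_tensor[of a b a b] by (simp only: ip_self)
  thus ?thesis by (simp only: of_real_mult[symmetric] of_real_eq_iff)
qed

lemma norm_tensor: "norm (tensor_vec a b) = norm a * norm b"
  by (rule power2_eq_imp_eq) (simp_all add: norm_tensor_sq power_mult_distrib)

lemma tensor_smult: "tensor_vec (x *s a) (y *s b) = (x * y) *s tensor_vec a b"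
  by (simp add: tensor_vec_def vec_eq_iff mult_ac)

lemma unitary_ip: "unitary U \<Longrightarrow> ip (U *v v) (U *v w) = ip v w"
  by (simp add: ip_adj unitary_def matrix_vector_mul_assoc)

lemma unitary_norm: "unitary U \<Longrightarrow> norm (U *v v) = norm v"
proof -
  assume "unitary U"
  hence "(of_real ((norm (U *v v))^2)::complex) = of_real ((norm v)^2)"
    using unitary_ip[of U v v] by (simp only: ip_self)
  hence "(norm (U *v v))^2 = (norm v)^2" by (simp only: of_real_eq_iff)
  thus ?thesis by (rule power2_eq_imp_eq) simp_all
qed

lemma kron_osum:
  "kron (osum m c) (osum n d) = (\<Sum>k<m. \<Sum>l<n. outer (tensor_vec (c k) (d l)) (tensor_vec (c k) (d l)))"
  by (simp add: vec_eq_iff kron_def osum_def outer_def tensor_vec_def sum_product mult_ac)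

lemma tensor_zero1[simp]: "tensor_vec 0 b = 0" by (simp add: tensor_vec_def vec_eq_iff)
lemma tensor_zero2[simp]: "tensor_vec a 0 = 0" by (simp add: tensor_vec_def vec_eq_iff)

lemma cont_qf_tensor: "continuous_on S (\<lambda>z. qf H (tensor_vec (fst z) (snd z)))"
  unfolding qf_def ip_def matrix_vector_mult_def tensor_vec_def
  by (simp add: vec_lambda_beta) (intro continuous_intros)

lemma tensor_normalize:
  assumes "(a::complex^'a) \<noteq> 0" "(b::complex^'b) \<noteq> 0"
  obtains u w where "norm u = 1" "norm w = 1"
    "tensor_vec a b = of_real (norm a * norm b) *s tensor_vec u w"
proof -
  define u where "u = (of_real (1 / norm a)) *s a"
  define w where "w = (of_real (1 / norm b)) *s b"
  have "a = of_real (norm a) *s u" "norm u = 1" using unit_normalize[OF assms(1)] u_def by auto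
  moreover have "b = of_real (norm b) *s w" "norm w = 1" using unit_normalize[OF assms(2)] w_def by auto
  ultimately show ?thesis using that tensor_smult[of "of_real (norm a)" u "of_real (norm b)" w] by simp
qed

lemma prod_max:
  fixes H :: "complex^('a::finite\<times>'b::finite)^('a\<times>'b)"
  obtains pm qm where "norm pm = 1" "norm qm = 1"
    "\<And>p q. qf H (tensor_vec p q) \<le> qf H (tensor_vec pm qm) * ((norm p)^2 * (norm q)^2)"
proof -
  define S where "S = sphere (0::complex^'a) 1 \<times> sphere (0::complex^'b) 1"
  have "compact ((\<lambda>z. qf H (tensor_vec (fst z) (snd z))) ` S)"
    by (rule compact_continuous_image[OF cont_qf_tensor]) (simp add: S_def compact_Times)
  moreover have "(\<lambda>z. qf H (tensor_vec (fst z) (snd z))) ` S \<noteq> {}" by (simp add: S_def)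
  ultimately obtain m where "m \<in> (\<lambda>z. qf H (tensor_vec (fst z) (snd z))) ` S"
    "\<forall>t\<in>(\<lambda>z. qf H (tensor_vec (fst z) (snd z))) ` S. t \<le> m"
    using compact_attains_sup by blast
  then obtain z0 where z0: "z0 \<in> S" "\<And>z. z \<in> S \<Longrightarrow> qf H (tensor_vec (fst z) (snd z)) \<le> qf H (tensor_vec (fst z0) (snd z0))"
    by auto
  have "qf H (tensor_vec p q) \<le> qf H (tensor_vec (fst z0) (snd z0)) * ((norm p)^2 * (norm q)^2)" for p q
  proof (cases "p = 0 \<or> q = 0")
    case False
    then obtain u w where uw: "norm u = 1" "norm w = 1" "tensor_vec p q = of_real (norm p * norm q) *s tensor_vec u w"
      using tensor_normalize by blast
    have "qf H (tensor_vec p q) = (norm p * norm q)^2 * qf H (tensor_vec u w)"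
      unfolding uw(3) qf_smult by (simp add: norm_mult)
    moreover have "qf H (tensor_vec u w) \<le> qf H (tensor_vec (fst z0) (snd z0))"
      using z0(2)[of "(u, w)"] uw by (simp add: S_def)
    ultimately show ?thesis
      by (simp add: power_mult_distrib mult.commute[of "_ ^ 2 * _ ^ 2"] mult_right_mono)
  qed auto
  thus ?thesis using that z0(1) by (auto simp: S_def)
qed

lemma prod_min:
  fixes H :: "complex^('a::finite\<times>'b::finite)^('a\<times>'b)"
  obtains pm qm where "norm pm = 1" "norm qm = 1"
    "\<And>p q. qf H (tensor_vec pm qm) * ((norm p)^2 * (norm q)^2) \<le> qf H (tensor_vec p q)"
proof -
  define S where "S = sphere (0::complex^'a) 1 \<times> sphere (0::complex^'b) 1"
  have "compact ((\<lambda>z. qf H (tensor_vec (fst z) (snd z))) ` S)"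
    by (rule compact_continuous_image[OF cont_qf_tensor]) (simp add: S_def compact_Times)
  moreover have "(\<lambda>z. qf H (tensor_vec (fst z) (snd z))) ` S \<noteq> {}" by (simp add: S_def)
  ultimately obtain m where "m \<in> (\<lambda>z. qf H (tensor_vec (fst z) (snd z))) ` S"
    "\<forall>t\<in>(\<lambda>z. qf H (tensor_vec (fst z) (snd z))) ` S. m \<le> t"
    using compact_attains_inf by blast
  then obtain z0 where z0: "z0 \<in> S" "\<And>z. z \<in> S \<Longrightarrow> qf H (tensor_vec (fst z0) (snd z0)) \<le> qf H (tensor_vec (fst z) (snd z))"
    by auto
  have "qf H (tensor_vec (fst z0) (snd z0)) * ((norm p)^2 * (norm q)^2) \<le> qf H (tensor_vec p q)" for p q
  proof (cases "p = 0 \<or> q = 0")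
    case False
    then obtain u w where uw: "norm u = 1" "norm w = 1" "tensor_vec p q = of_real (norm p * norm q) *s tensor_vec u w"
      using tensor_normalize by blast
    have "qf H (tensor_vec p q) = (norm p * norm q)^2 * qf H (tensor_vec u w)"
      unfolding uw(3) qf_smult by (simp add: norm_mult)
    moreover have "qf H (tensor_vec (fst z0) (snd z0)) \<le> qf H (tensor_vec u w)"
      using z0(2)[of "(u, w)"] uw by (simp add: S_def)
    ultimately show ?thesis
      by (simp add: power_mult_distrib mult.commute[of "_ ^ 2 * _ ^ 2"] mult_right_mono)
  qed auto
  thus ?thesis using that z0(1) by (auto simp: S_def)
qed

lemma density_psd: "density A \<Longrightarrow> psd A" by (simp add: density_def)

lemma energy_kron_repr:
  fixes H :: "complex^('a::finite\<times>'b::finite)^('a\<times>'b)"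
  assumes dA: "density A" and dB: "density B" and uA: "unitary Ua" and uB: "unitary Ub"
  shows "\<exists>(m::nat) (n::nat) (c::nat \<Rightarrow> complex^'a) (d::nat \<Rightarrow> complex^'b).
    energy (kron A B) H Ua Ub = (\<Sum>k<m. \<Sum>l<n. qf H (tensor_vec (Ua *v c k) (Ub *v d l))) \<and>
    (\<Sum>k<m. (norm (Ua *v c k))^2) = 1 \<and> (\<Sum>l<n. (norm (Ub *v d l))^2) = 1"
proof -
  obtain m c where c: "A = osum m c" using psd_decomp[OF density_psd[OF dA]] by blast
  obtain n d where d: "B = osum n d" using psd_decomp[OF density_psd[OF dB]] by blast
  have "energy (kron A B) H Ua Ub = (\<Sum>k<m. \<Sum>l<n. qf H (tensor_vec (Ua *v c k) (Ub *v d l)))"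
    unfolding c d kron_osum by (simp add: energy_sum energy_outer kron_tensor)
  moreover have "(\<Sum>k<m. (norm (Ua *v c k))^2) = 1"
    using density_osum[OF dA c] by (simp add: unitary_norm[OF uA])
  moreover have "(\<Sum>l<n. (norm (Ub *v d l))^2) = 1"
    using density_osum[OF dB d] by (simp add: unitary_norm[OF uB])
  ultimately show ?thesis by blast
qed

lemma dsum_eq:
  fixes x y :: "nat \<Rightarrow> real"
  assumes "(\<Sum>k<m. x k) = 1" "(\<Sum>l<n. y l) = 1"
  shows "(\<Sum>k<m. \<Sum>l<n. P * (x k * y l)) = P"
proof -
  have "(\<Sum>k<m. \<Sum>l<n. P * (x k * y l)) = (\<Sum>k<m. P * x k * (\<Sum>l<n. y l))"
    by (intro sum.cong refl) (simp add: sum_distrib_left mult.assoc)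
  also have "\<dots> = P * (\<Sum>k<m. x k)" using assms(2) by (simp add: sum_distrib_left)
  also have "\<dots> = P" using assms(1) by simp
  finally show ?thesis .
qed

lemma double_sum_le:
  fixes f :: "nat \<Rightarrow> nat \<Rightarrow> real"
  assumes "\<And>k l. f k l \<le> P * (x k * y l)" "(\<Sum>k<m. x k) = 1" "(\<Sum>l<n. y l) = 1"
  shows "(\<Sum>k<m. \<Sum>l<n. f k l) \<le> P"
proof -
  have "(\<Sum>k<m. \<Sum>l<n. f k l) \<le> (\<Sum>k<m. \<Sum>l<n. P * (x k * y l))"
    by (intro sum_mono assms(1))
  also have "\<dots> = P" by (rule dsum_eq[OF assms(2,3)])
  finally show ?thesis .
qed

lemma double_sum_ge:
  fixes f :: "nat \<Rightarrow> nat \<Rightarrow> real"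
  assumes "\<And>k l. P * (x k * y l) \<le> f k l" "(\<Sum>k<m. x k) = 1" "(\<Sum>l<n. y l) = 1"
  shows "P \<le> (\<Sum>k<m. \<Sum>l<n. f k l)"
proof -
  have "P = (\<Sum>k<m. \<Sum>l<n. P * (x k * y l))" by (rule dsum_eq[OF assms(2,3), symmetric])
  also have "\<dots> \<le> (\<Sum>k<m. \<Sum>l<n. f k l)"
    by (intro sum_mono assms(1))
  finally show ?thesis .
qed

lemma mat_scaleR_left: "((c::real) *\<^sub>R (A::complex^'n^'m)) ** B = c *\<^sub>R (A ** B)"
  by (simp add: matrix_matrix_mult_def vec_eq_iff scaleR_sum_right)
lemma mat_scaleR_right: "(A::complex^'n^'m) ** ((c::real) *\<^sub>R B) = c *\<^sub>R (A ** B)"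
  by (simp add: matrix_matrix_mult_def vec_eq_iff scaleR_sum_right)
lemma trace_scaleR: "trace ((c::real) *\<^sub>R (A::complex^'n^'n)) = c *\<^sub>R trace A"
  by (simp add: trace_def scaleR_sum_right)

lemma energy_comb:
  "energy (u *\<^sub>R x + v *\<^sub>R y) H Ua Ub = u * energy x H Ua Ub + v * energy y H Ua Ub"
  by (simp add: energy_def matrix_add_ldistrib mat_add_rdistrib mat_scaleR_left mat_scaleR_right
      trace_add trace_scaleR)

lemma separable_energy_bounds:
  fixes H :: "complex^('a::finite\<times>'b::finite)^('a\<times>'b)"
  assumes r: "\<rho> \<in> separable" and uA: "unitary Ua" and uB: "unitary Ub"
    and lo: "\<And>p q. Pl * ((norm p)^2 * (norm q)^2) \<le> qf H (tensor_vec p q)"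
    and hi: "\<And>p q. qf H (tensor_vec p q) \<le> Ph * ((norm p)^2 * (norm q)^2)"
  shows "Pl \<le> energy \<rho> H Ua Ub \<and> energy \<rho> H Ua Ub \<le> Ph"
proof -
  define C where "C = {\<sigma>. Pl \<le> energy \<sigma> H Ua Ub \<and> energy \<sigma> H Ua Ub \<le> Ph}"
  have gen: "{kron \<rho>a \<rho>b | \<rho>a \<rho>b. density \<rho>a \<and> density \<rho>b} \<subseteq> C"
  proof clarify
    fix A :: "complex^'a^'a" and B :: "complex^'b^'b" assume dA: "density A" and dB: "density B"
    obtain m n :: nat and c d where e:
      "energy (kron A B) H Ua Ub = (\<Sum>k<m. \<Sum>l<n. qf H (tensor_vec (Ua *v c k) (Ub *v d l)))"
      "(\<Sum>k<m. (norm (Ua *v c k))^2) = 1" "(\<Sum>l<n. (norm (Ub *v d l))^2) = 1"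
      using energy_kron_repr[where H=H, OF dA dB uA uB] by blast
    have "Pl \<le> energy (kron A B) H Ua Ub" unfolding e(1)
      by (rule double_sum_ge[where x="\<lambda>k. (norm (Ua *v c k))^2" and y="\<lambda>l. (norm (Ub *v d l))^2"])
        (rule lo, rule e(2), rule e(3))
    moreover have "energy (kron A B) H Ua Ub \<le> Ph" unfolding e(1)
      by (rule double_sum_le[where x="\<lambda>k. (norm (Ua *v c k))^2" and y="\<lambda>l. (norm (Ub *v d l))^2"])
        (rule hi, rule e(2), rule e(3))
    ultimately show "kron A B \<in> C" by (simp add: C_def)
  qed
  have "convex C"
    unfolding convex_def C_def
  proof (intro ballI allI impI, simp only: mem_Collect_eq energy_comb, elim conjE)
    fix x y u v
    assume a: "Pl \<le> energy x H Ua Ub" "energy x H Ua Ub \<le> Ph" "Pl \<le> energy y H Ua Ub" "energy y H Ua Ub \<le> Ph"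
      "0 \<le> (u::real)" "0 \<le> (v::real)" "u + v = 1"
    have "u * Pl \<le> u * energy x H Ua Ub" "v * Pl \<le> v * energy y H Ua Ub"
      "u * energy x H Ua Ub \<le> u * Ph" "v * energy y H Ua Ub \<le> v * Ph"
      using a by (simp_all add: mult_left_mono)
    moreover have "u * Pl + v * Pl = Pl" "u * Ph + v * Ph = Ph" using a(7) by (simp_all add: distrib_right[symmetric])
    ultimately show "Pl \<le> u * energy x H Ua Ub + v * energy y H Ua Ub \<and> u * energy x H Ua Ub + v * energy y H Ua Ub \<le> Ph"
      by linarith
  qed
  hence "separable \<subseteq> C" unfolding separable_def by (rule hull_minimal[OF gen])
  thus ?thesis using r by (auto simp: C_def)
qed

lemma cadj_mat1: "cadj (mat 1 :: complex^'n^'n) = mat 1"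
  using cadj_mat[of 1] by simp

lemma herm_unitary:
  assumes h: "cadj R = R" and sq: "\<And>v. R *v (R *v v) = (v::complex^'n)"
  shows "unitary R"
proof -
  have "R ** R = mat 1" unfolding matrix_eq using sq by (simp add: matrix_vector_mul_assoc)
  thus ?thesis unfolding unitary_def h by simp
qed

lemma householder:
  fixes x y :: "complex^'n"
  assumes nx: "norm x = 1" and ny: "norm y = 1"
  obtains U \<omega> where "unitary U" "U *v x = \<omega> *s y" "cmod \<omega> = 1"
proof -
  define g where "g = ip y x"
  define \<omega> where "\<omega> = (if g = 0 then 1 else g / of_real (cmod g))"
  have w1: "cmod \<omega> = 1" by (simp add: \<omega>_def norm_divide)
  define y' where "y' = \<omega> *s y"
  have ipyx: "ip y' x = of_real (cmod g)"
  proof (cases "g = 0")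
    case True thus ?thesis by (simp add: y'_def \<omega>_def ip_smult_left g_def[symmetric])
  next
    case False
    have cg: "cnj g * g = (of_real (cmod g))^2" using complex_norm_square[of g] by (simp add: mult.commute)
    have "ip y' x = cnj g * g / of_real (cmod g)"
      using False by (simp add: y'_def \<omega>_def ip_smult_left g_def[symmetric])
    also have "\<dots> = of_real (cmod g)" unfolding cg using False by (simp add: power2_eq_square)
    finally show ?thesis .
  qed
  have ipxy: "ip x y' = of_real (cmod g)" using ipyx ip_cnj[of y' x] by simp
  have ipxx: "ip x x = 1" using nx by (simp add: ip_self)
  have ipyy: "ip y' y' = 1" using ny w1 by (simp add: ip_self y'_def norm_smult_vec)
  show ?thesis
  proof (cases "x = y'")
    case True
    have "unitary (mat 1 :: complex^'n^'n)" by (simp add: unitary_def cadj_mat1)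
    thus ?thesis using that[of "mat 1" \<omega>] True w1 y'_def by simp
  next
    case False
    define w where "w = x - y'"
    have wz: "w \<noteq> 0" using False w_def by simp
    define t where "t = cmod g"
    have ipww: "ip w w = of_real (2 - 2 * t)"
      by (simp add: w_def ip_diff_left ip_diff_right ipxx ipyy ipxy ipyx t_def)
    have ipwx: "ip w x = of_real (1 - t)"
      by (simp add: w_def ip_diff_left ipxx ipyx t_def)
    have nn: "2 - 2 * t \<noteq> 0" using ipww wz ip_self_eq0[of w] by auto
    define a where "a = 2 / (2 - 2 * t)"
    have ar: "a * (2 - 2 * t) = 2" using nn unfolding a_def by (metis times_divide_eq_left nonzero_mult_div_cancel_right)
    have "of_real a * ip w w = (of_real (a * (2 - 2 * t)) :: complex)" unfolding ipww of_real_mult ..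
    hence a2: "of_real a * ip w w = 2" unfolding ar by simp
    define R where "R = mat 1 - outer (of_real a *s w) w"
    have Rv: "R *v v = v - (of_real a * ip w v) *s w" for v
      by (simp add: R_def mv_mdiff outer_mv vector_smult_assoc mult.commute)
    have "outer w (of_real a *s w) = outer (of_real a *s w) w"
      by (simp add: outer_def vec_eq_iff mult_ac)
    hence "cadj R = R"
      by (simp add: R_def cadj_diff cadj_mat1 cadj_outer)
    moreover have "R *v (R *v v) = v" for v
    proof -
      have "ip w (R *v v) = ip w v - of_real a * ip w v * ip w w"
        by (simp add: Rv ip_diff_right ip_smult_right)
      moreover have "of_real a * ip w v * ip w w = (of_real a * ip w w) * ip w v" by (simp add: mult_ac)
      ultimately have "ip w (R *v v) = ip w v - 2 * ip w v" unfolding a2 by simp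
      hence ipR: "ip w (R *v v) = - ip w v" by simp
      have "R *v (R *v v) = R *v v - (of_real a * ip w (R *v v)) *s w" by (rule Rv)
      also have "\<dots> = R *v v + (of_real a * ip w v) *s w" unfolding ipR by (simp add: vec_eq_iff)
      also have "\<dots> = v" by (simp add: Rv vec_eq_iff)
      finally show ?thesis .
    qed
    ultimately have uR: "unitary R" by (rule herm_unitary)
    have "of_real a * ip w x = 1" using nn by (simp add: ipwx a_def field_simps)
    hence "R *v x = y'" by (simp add: Rv w_def)
    thus ?thesis using that[OF uR, of \<omega>] w1 y'_def by simp
  qed
qed

lemma eigen_scale: "(H::complex^'n^'n) *v v = of_real r *s v \<Longrightarrow> H *v (c *s v) = of_real r *s (c *s v)"
  by (simp add: mv_smult vector_smult_assoc mult.commute)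

lemma density_outer: "norm u = 1 \<Longrightarrow> density (outer u u)"
proof -
  assume n: "norm u = 1"
  have "hermitian (outer u u)" by (simp add: hermitian_def cadj_outer)
  moreover have "0 \<le> qf (outer u u) v" for v
  proof -
    have "qf (outer u u) v = Re (ip u v * cnj (ip u v))"
      by (simp add: qf_def outer_mv ip_smult_right ip_cnj mult.commute)
    thus ?thesis by (simp add: re_mult_cnj)
  qed
  moreover have "trace (outer u u) = 1" using n by (simp add: trace_outer ip_self)
  ultimately show ?thesis by (simp add: density_def psd_qf)
qed

lemma kron_outer: "kron (outer a a) (outer b b) = outer (tensor_vec a b) (tensor_vec a b)"
  by (simp add: kron_def outer_def tensor_vec_def vec_eq_iff mult_ac)

lemma outer_separable:
  "norm (a::complex^'a::finite) = 1 \<Longrightarrow> norm (b::complex^'b::finite) = 1 \<Longrightarrow>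
     outer (tensor_vec a b) (tensor_vec a b) \<in> separable"
  unfolding separable_def kron_outer[symmetric]
  by (rule hull_inc) (blast intro: density_outer)

lemma unitary_mat1: "unitary (mat 1 :: complex^'n^'n)"
  by (simp add: unitary_def cadj_mat1)

lemma normalize_prod:
  assumes "(a::complex^'a::finite) \<noteq> 0" "(b::complex^'b::finite) \<noteq> 0" "H *v tensor_vec a b = of_real r *s tensor_vec a b"
  obtains u w where "norm u = 1" "norm w = 1" "H *v tensor_vec u w = of_real r *s tensor_vec u w"
proof -
  obtain u w where uw: "norm u = 1" "norm w = 1" "tensor_vec a b = of_real (norm a * norm b) *s tensor_vec u w"
    using tensor_normalize[OF assms(1,2)] by blast
  have nz: "norm a * norm b \<noteq> 0" using assms(1,2) by simp
  have "tensor_vec u w = of_real (1 / (norm a * norm b)) *s tensor_vec a b"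
    using nz by (simp add: uw(3) vector_smult_assoc)
  hence "H *v tensor_vec u w = of_real r *s tensor_vec u w"
    using eigen_scale[OF assms(3)] by simp
  thus ?thesis using that uw(1,2) by blast
qed

theorem mainTheorem2:
  fixes H :: "complex^('a::finite\<times>'b::finite)^('a\<times>'b)"
  assumes "hermitian H"
  shows "capP1 H = opnorm_inf H \<longleftrightarrow>
           (contains_product_vector (eigenspace H (E0 H)) \<and>
            contains_product_vector (eigenspace H (Emax H)))"
proof -
  note h = assms
  obtain vM :: "complex^('a\<times>'b)" where vM: "norm vM = 1" "\<And>v. qf H v \<le> qf H vM * (norm v)^2" using rayleigh_max[of H] by blast
  obtain vm :: "complex^('a\<times>'b)" where vm: "norm vm = 1" "\<And>v. qf H vm * (norm v)^2 \<le> qf H v" using rayleigh_min[of H] by blast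
  have EM: "Emax H = qf H vM" by (rule Emax_char(1)[OF h vM])
  have Em: "E0 H = qf H vm" by (rule E0_char(1)[OF h vm])
  obtain pM :: "complex^'a" and qM :: "complex^'b" where pq: "norm pM = 1" "norm qM = 1"
    "\<And>p q. qf H (tensor_vec p q) \<le> qf H (tensor_vec pM qM) * ((norm p)^2 * (norm q)^2)"
  proof (rule prod_max[of H])
    fix pM qM assume "norm pM = 1" "norm qM = 1"
      "\<And>p q. qf H (tensor_vec p q) \<le> qf H (tensor_vec pM qM) * ((norm p)^2 * (norm q)^2)"
    then show ?thesis by (rule that)
  qed
  obtain pm :: "complex^'a" and qm :: "complex^'b" where pqm: "norm pm = 1" "norm qm = 1"
    "\<And>p q. qf H (tensor_vec pm qm) * ((norm p)^2 * (norm q)^2) \<le> qf H (tensor_vec p q)"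
  proof (rule prod_min[of H])
    fix pm qm assume "norm pm = 1" "norm qm = 1"
      "\<And>p q. qf H (tensor_vec pm qm) * ((norm p)^2 * (norm q)^2) \<le> qf H (tensor_vec p q)"
    then show ?thesis by (rule that)
  qed
  define Ph where "Ph = qf H (tensor_vec pM qM)"
  define Pl where "Pl = qf H (tensor_vec pm qm)"
  have PhE: "Ph \<le> Emax H" using vM(2)[of "tensor_vec pM qM"] pq(1,2) by (simp add: Ph_def EM norm_tensor)
  have PlE: "E0 H \<le> Pl" using vm(2)[of "tensor_vec pm qm"] pqm(1,2) by (simp add: Pl_def Em norm_tensor)
  define UU where "UU = {(Ua::complex^'a^'a, Ub::complex^'b^'b). unitary Ua \<and> unitary Ub}"
  have "(mat 1, mat 1) \<in> UU" by (simp add: UU_def unitary_mat1)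
  hence UUne: "UU \<noteq> {}" by auto
  have bnd: "Pl \<le> energy \<rho> H (fst U) (snd U) \<and> energy \<rho> H (fst U) (snd U) \<le> Ph"
    if r: "\<rho> \<in> separable" and u: "U \<in> UU" for \<rho> U
  proof -
    from u have uA: "unitary (fst U)" and uB: "unitary (snd U)" by (auto simp: UU_def)
    show ?thesis unfolding Pl_def Ph_def by (rule separable_energy_bounds[OF r uA uB pqm(3) pq(3)])
  qed
  have capP_eq: "capP \<rho> H = (SUP U\<in>UU. energy \<rho> H (fst U) (snd U)) - (INF U\<in>UU. energy \<rho> H (fst U) (snd U))" for \<rho>
    unfolding capP_def UU_def ..
  have bddA: "bdd_above ((\<lambda>U. energy \<rho> H (fst U) (snd U)) ` UU)" if "\<rho> \<in> separable" for \<rho>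
    by (rule bdd_aboveI2[where M=Ph]) (use bnd[OF that] in blast)
  have bddB: "bdd_below ((\<lambda>U. energy \<rho> H (fst U) (snd U)) ` UU)" if "\<rho> \<in> separable" for \<rho>
    by (rule bdd_belowI2[where m=Pl]) (use bnd[OF that] in blast)
  have capP_le: "capP \<rho> H \<le> Ph - Pl" if r: "\<rho> \<in> separable" for \<rho>
  proof -
    have "(SUP U\<in>UU. energy \<rho> H (fst U) (snd U)) \<le> Ph"
      by (rule cSUP_least[OF UUne]) (use bnd[OF r] in blast)
    moreover have "Pl \<le> (INF U\<in>UU. energy \<rho> H (fst U) (snd U))"
      by (rule cINF_greatest[OF UUne]) (use bnd[OF r] in blast)
    ultimately show ?thesis unfolding capP_eq by simp
  qed
  obtain e1 :: "complex^'a" where e1: "norm e1 = 1" using vector_choose_size[of 1] by auto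
  obtain e2 :: "complex^'b" where e2: "norm e2 = 1" using vector_choose_size[of 1] by auto
  have sepne: "(separable :: (complex^('a\<times>'b)^('a\<times>'b)) set) \<noteq> {}"
    using outer_separable[OF e1 e2] by blast
  have bddS: "bdd_above ((\<lambda>\<rho>. capP \<rho> H) ` separable)"
    by (rule bdd_aboveI2[where M="Ph - Pl"]) (rule capP_le)
  have cap_le: "capP1 H \<le> Ph - Pl"
    unfolding capP1_def by (rule cSUP_least[OF sepne capP_le])
  have hiM: "\<And>v. qf H v \<le> Emax H * (norm v)^2" using vM(2) EM by simp
  have lom: "\<And>v. E0 H * (norm v)^2 \<le> qf H v" using vm(2) Em by simp
  show ?thesis
  proof
    assume eq: "capP1 H = opnorm_inf H"
    hence "Emax H - E0 H \<le> Ph - Pl" using cap_le by (simp add: opnorm_inf_def)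
    hence PhM: "Ph = Emax H" and Plm: "Pl = E0 H" using PhE PlE by linarith+
    have nt: "norm (tensor_vec pM qM) = 1" "norm (tensor_vec pm qm) = 1"
      using pq pqm by (simp_all add: norm_tensor)
    have "H *v tensor_vec pM qM = of_real (Emax H) *s tensor_vec pM qM"
      by (rule eig_max[OF h hiM]) (simp add: nt PhM[symmetric] Ph_def)
    moreover have "H *v tensor_vec pm qm = of_real (E0 H) *s tensor_vec pm qm"
      by (rule eig_min[OF h lom]) (simp add: nt Plm[symmetric] Pl_def)
    moreover have "pM \<noteq> 0" "qM \<noteq> 0" "pm \<noteq> 0" "qm \<noteq> 0" using pq pqm by auto
    ultimately have c1: "contains_product_vector (eigenspace H (E0 H))"
      and c2: "contains_product_vector (eigenspace H (Emax H))"
      unfolding contains_product_vector_def eigenspace_def mem_Collect_eq by auto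
    from c1 c2 show "contains_product_vector (eigenspace H (E0 H)) \<and> contains_product_vector (eigenspace H (Emax H))" ..
  next
    assume "contains_product_vector (eigenspace H (E0 H)) \<and> contains_product_vector (eigenspace H (Emax H))"
    hence c1: "contains_product_vector (eigenspace H (E0 H))" and c2: "contains_product_vector (eigenspace H (Emax H))" by auto
    obtain a0 :: "complex^'a" and b0 :: "complex^'b" where ab0: "a0 \<noteq> 0" "b0 \<noteq> 0" "H *v tensor_vec a0 b0 = of_real (E0 H) *s tensor_vec a0 b0"
      using c1 unfolding contains_product_vector_def eigenspace_def mem_Collect_eq by blast
    obtain a1 :: "complex^'a" and b1 :: "complex^'b" where ab1: "a1 \<noteq> 0" "b1 \<noteq> 0" "H *v tensor_vec a1 b1 = of_real (Emax H) *s tensor_vec a1 b1"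
      using c2 unfolding contains_product_vector_def eigenspace_def mem_Collect_eq by blast
    obtain u0 :: "complex^'a" and w0 :: "complex^'b" where uw0: "norm u0 = 1" "norm w0 = 1" "H *v tensor_vec u0 w0 = of_real (E0 H) *s tensor_vec u0 w0"
      using normalize_prod[OF ab0] by blast
    obtain u1 :: "complex^'a" and w1 :: "complex^'b" where uw1: "norm u1 = 1" "norm w1 = 1" "H *v tensor_vec u1 w1 = of_real (Emax H) *s tensor_vec u1 w1"
      using normalize_prod[OF ab1] by blast
    obtain Ua :: "complex^'a^'a" and \<omega>a :: complex where Ua: "unitary Ua" "Ua *v u0 = \<omega>a *s u1" "cmod \<omega>a = 1"
      using householder[OF uw0(1) uw1(1)] by blast
    obtain Ub :: "complex^'b^'b" and \<omega>b :: complex where Ub: "unitary Ub" "Ub *v w0 = \<omega>b *s w1" "cmod \<omega>b = 1"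
      using householder[OF uw0(2) uw1(2)] by blast
    define \<rho> where "\<rho> = outer (tensor_vec u0 w0) (tensor_vec u0 w0)"
    have rs: "\<rho> \<in> separable" unfolding \<rho>_def by (rule outer_separable[OF uw0(1,2)])
    have en0: "energy \<rho> H (mat 1) (mat 1) = E0 H"
      using eig_qf[OF uw0(3)] uw0(1,2) by (simp add: \<rho>_def energy_outer kron_tensor norm_tensor)
    have en1: "energy \<rho> H Ua Ub = Emax H"
    proof -
      have "energy \<rho> H Ua Ub = qf H ((\<omega>a * \<omega>b) *s tensor_vec u1 w1)"
        by (simp add: \<rho>_def energy_outer kron_tensor Ua(2) Ub(2) tensor_smult)
      also have "\<dots> = qf H (tensor_vec u1 w1)" by (simp add: qf_smult norm_mult Ua(3) Ub(3))
      also have "\<dots> = Emax H" using eig_qf[OF uw1(3)] uw1(1,2) by (simp add: norm_tensor)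
      finally show ?thesis .
    qed
    have "(mat 1, mat 1) \<in> UU" "(Ua, Ub) \<in> UU" by (simp_all add: UU_def unitary_mat1 Ua(1) Ub(1))
    hence "Emax H \<le> (SUP U\<in>UU. energy \<rho> H (fst U) (snd U))"
      "(INF U\<in>UU. energy \<rho> H (fst U) (snd U)) \<le> E0 H"
      using cSUP_upper[OF _ bddA[OF rs], of "(Ua, Ub)"] cINF_lower[OF bddB[OF rs], of "(mat 1, mat 1)"] en0 en1
      by auto
    hence "Emax H - E0 H \<le> capP \<rho> H" unfolding capP_eq by simp
    also have "capP \<rho> H \<le> capP1 H" unfolding capP1_def by (rule cSUP_upper[OF rs bddS])
    finally have "Emax H - E0 H \<le> capP1 H" .
    moreover have "capP1 H \<le> Emax H - E0 H" using cap_le PhE PlE by simp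
    ultimately show "capP1 H = opnorm_inf H" by (simp add: opnorm_inf_def)
  qed
qed

end
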